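(* Let $M$ be a finite $\mathscr R$-trivial monoid and $m\in M$. Then the idempotents of $\widetilde L_m$ are exactly the elements of the minimal ideal of $\mathrm{St}_R(m)$, and this set is moreover an $\mathscr L$-class of $M$.
   Context: $M$ is $\mathscr R$-trivial if $mM=nM$ implies $m=n$. $\mathrm{St}_R(m)=\{n\in M: mn=m\}$ (a submonoid). Define $m\le_{\widetilde{\mathscr L}}n$ if for every idempotent $e$, $ne=n$ implies $me=m$; $m\mathrel{\widetilde{\mathscr L}}n$ if $m\le_{\widetilde{\mathscr L}}n$ and $n\le_{\widetilde{\mathscr L}}m$; $\widetilde L_m$ is the $\widetilde{\mathscr L}$-class of $m$. An $\mathscr L$-class of $M$ is a set $\{n: Mn=Mx\}$ for some $x\in M$. *)

theory Defs
  imports Main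
begin

text \<open>Monoid elements are elements of a type of class monoid_mult; the whole type is M.\<close>

definition R_trivial :: "'a::monoid_mult itself \<Rightarrow> bool" where
  "R_trivial _ \<longleftrightarrow> (\<forall>m n::'a. range (\<lambda>x. m * x) = range (\<lambda>x. n * x) \<longrightarrow> m = n)"

definition StR :: "'a::monoid_mult \<Rightarrow> 'a set" where
  "StR m = {n. m * n = m}"

definition Ltilde_le :: "'a::monoid_mult \<Rightarrow> 'a \<Rightarrow> bool" where
  "Ltilde_le m n \<longleftrightarrow> (\<forall>e. e * e = e \<longrightarrow> n * e = n \<longrightarrow> m * e = m)"

definition Ltilde_class :: "'a::monoid_mult \<Rightarrow> 'a set" where
  "Ltilde_class m = {n. Ltilde_le m n \<and> Ltilde_le n m}"

definition is_ideal_of :: "'a::monoid_mult set \<Rightarrow> 'a set \<Rightarrow> bool" where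
  "is_ideal_of S I \<longleftrightarrow> I \<noteq> {} \<and> I \<subseteq> S \<and> (\<forall>s\<in>S. \<forall>x\<in>I. s * x \<in> I \<and> x * s \<in> I)"

definition minimal_ideal :: "'a::monoid_mult set \<Rightarrow> 'a set" where
  "minimal_ideal S = (THE I. is_ideal_of S I \<and> (\<forall>J. is_ideal_of S J \<longrightarrow> I \<subseteq> J))"

definition is_L_class :: "'a::monoid_mult set \<Rightarrow> bool" where
  "is_L_class A \<longleftrightarrow> (\<exists>x. A = {n. range (\<lambda>y. y * n) = range (\<lambda>y. y * x)})"

end

theory Submission
  imports Defs
begin

lemma rt_eq:
  fixes x y :: "'a::{monoid_mult, finite}"
  assumes rt: "R_trivial TYPE('a)"
    and c: "card (range (\<lambda>z. x * z)) \<le> card (range (\<lambda>z. (x * y) * z))"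
  shows "x * y = x"
proof -
  have sub: "range (\<lambda>z. (x * y) * z) \<subseteq> range (\<lambda>z. x * z)"
    by (auto simp: mult.assoc)
  have "card (range (\<lambda>z. (x * y) * z)) \<le> card (range (\<lambda>z. x * z))"
    by (rule card_mono[OF _ sub]) simp
  with c have "card (range (\<lambda>z. (x * y) * z)) = card (range (\<lambda>z. x * z))" by simp
  then have "range (\<lambda>z. (x * y) * z) = range (\<lambda>z. x * z)"
    by (intro card_subset_eq[OF _ sub]) simp
  with rt show ?thesis unfolding R_trivial_def by blast
qed

lemma rt_range_eq:
  fixes x y :: "'a::{monoid_mult, finite}"
  assumes rt: "R_trivial TYPE('a)"
    and "range (\<lambda>z. x * z) = range (\<lambda>z. y * z)"
  shows "x = y"
  using assms unfolding R_trivial_def by blast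

lemma idem_pow:
  fixes s :: "'a::{monoid_mult, finite}"
  assumes rt: "R_trivial TYPE('a)"
  shows "\<exists>k. s^k * s = s^k \<and> s^k * s^k = s^k"
proof -
  obtain k where k: "\<forall>j. card (range (\<lambda>z. s^k * z)) \<le> card (range (\<lambda>z. s^j * z))"
    using ex_has_least_nat[of "\<lambda>_. True" 0 "\<lambda>j. card (range (\<lambda>z. s^j * z))"] by blast
  have ks: "s^k * s = s^k"
    using k[rule_format, of "Suc k"] by (intro rt_eq[OF rt]) (simp add: power_Suc2 power_commutes)
  have "\<And>j. s^k * s^j = s^k"
  proof -
    fix j show "s^k * s^j = s^k"
      by (induction j) (simp_all add: power_Suc2 mult.assoc[symmetric] ks)
  qed
  with ks show ?thesis by blast
qed

theorem mainTheorem20: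
  fixes m :: "'a::{monoid_mult, finite}"
  assumes "R_trivial TYPE('a)"
  shows "{e \<in> Ltilde_class m. e * e = e} = minimal_ideal (StR m)
         \<and> is_L_class {e \<in> Ltilde_class m. e * e = e}"
proof -
  note rt = assms
  define S where "S = StR m"
  define Z where "Z = {x \<in> S. \<forall>s\<in>S. x * s = x}"
  have inS: "x \<in> S \<longleftrightarrow> m * x = m" for x unfolding S_def StR_def by simp
  have Sclosed: "a \<in> S \<Longrightarrow> b \<in> S \<Longrightarrow> a * b \<in> S" for a b
    by (simp add: inS mult.assoc[symmetric])
  have "1 \<in> S" by (simp add: inS)
  then obtain x0 where x0S: "x0 \<in> S" and x0min:
    "\<forall>y. y \<in> S \<longrightarrow> card (range (\<lambda>z. x0 * z)) \<le> card (range (\<lambda>z. y * z))"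
    using ex_has_least_nat[of "\<lambda>y. y \<in> S" 1 "\<lambda>y. card (range (\<lambda>z. y * z))"] by blast
  have x0Z: "x0 \<in> Z"
    unfolding Z_def using x0S
    by (auto intro!: rt_eq[OF rt] x0min[rule_format] Sclosed)
  have idZ: "is_ideal_of S Z"
    unfolding is_ideal_of_def Z_def using x0Z[unfolded Z_def]
    by (auto intro: Sclosed simp: mult.assoc)
  have minZ: "Z \<subseteq> J" if "is_ideal_of S J" for J
  proof
    fix x assume x: "x \<in> Z"
    from that obtain j where j: "j \<in> J" "J \<subseteq> S" and cl: "\<forall>s\<in>S. \<forall>y\<in>J. s * y \<in> J"
      unfolding is_ideal_of_def by blast
    have "x * j = x" using x j unfolding Z_def by blast
    moreover have "x * j \<in> J" using cl x j unfolding Z_def by blast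
    ultimately show "x \<in> J" by simp
  qed
  have MI: "minimal_ideal S = Z"
    unfolding minimal_ideal_def
  proof (rule the_equality)
    show "is_ideal_of S Z \<and> (\<forall>J. is_ideal_of S J \<longrightarrow> Z \<subseteq> J)" using idZ minZ by blast
  next
    fix I assume "is_ideal_of S I \<and> (\<forall>J. is_ideal_of S J \<longrightarrow> I \<subseteq> J)"
    with idZ minZ show "I = Z" by blast
  qed
  have EZ: "{e \<in> Ltilde_class m. e * e = e} = Z"
  proof (intro equalityI subsetI)
    fix e assume "e \<in> {e \<in> Ltilde_class m. e * e = e}"
    then have ee: "e * e = e" and l1: "Ltilde_le e m" and l2: "Ltilde_le m e"
      unfolding Ltilde_class_def by auto
    have eS: "e \<in> S" using l2 ee unfolding Ltilde_le_def inS by blast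
    have "e * s = e" if sS: "s \<in> S" for s
    proof -
      obtain k where k1: "s^k * s = s^k" and k2: "s^k * s^k = s^k"
        using idem_pow[OF rt] by blast
      have "m * s^k = m" using sS by (induction k) (simp_all add: inS power_Suc2 mult.assoc[symmetric])
      then have es: "e * s^k = e" using l1 k2 unfolding Ltilde_le_def by blast
      have "e * s = e * s^k * s" using es by metis
      also have "\<dots> = e * (s^k * s)" by (rule mult.assoc)
      also have "\<dots> = e" using k1 es by metis
      finally show ?thesis .
    qed
    with eS show "e \<in> Z" unfolding Z_def by blast
  next
    fix x assume xZ: "x \<in> Z"
    then have xS: "x \<in> S" and xs: "\<forall>s\<in>S. x * s = x" unfolding Z_def by auto
    have xx: "x * x = x" using xS xs by blast
    have "Ltilde_le x m" unfolding Ltilde_le_def using xs inS by blast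
    moreover have "Ltilde_le m x" unfolding Ltilde_le_def
    proof (intro allI impI)
      fix f assume "f * f = f" "x * f = x"
      then have "m * x * f = m * x" by (simp add: mult.assoc)
      then show "m * f = m" using xS inS by simp
    qed
    ultimately show "x \<in> {e \<in> Ltilde_class m. e * e = e}"
      using xx unfolding Ltilde_class_def by blast
  qed
  have "Z = {n. range (\<lambda>y. y * n) = range (\<lambda>y. y * x0)}"
  proof (intro equalityI subsetI)
    fix n assume nZ: "n \<in> Z"
    have "n * x0 = n" using nZ x0S unfolding Z_def by blast
    moreover have "x0 * n = x0" using x0Z nZ unfolding Z_def by blast
    ultimately show "n \<in> {n. range (\<lambda>y. y * n) = range (\<lambda>y. y * x0)}"
      by (auto simp: mult.assoc) (metis mult.assoc rangeI)+
  next
    fix n assume "n \<in> {n. range (\<lambda>y. y * n) = range (\<lambda>y. y * x0)}"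
    then have eq: "range (\<lambda>y. y * n) = range (\<lambda>y. y * x0)" by simp
    have "n \<in> range (\<lambda>y. y * n)" by (metis mult_1_left rangeI)
    then obtain a where a: "n = a * x0" using eq by auto
    have "x0 \<in> range (\<lambda>y. y * x0)" by (metis mult_1_left rangeI)
    then obtain b where b: "x0 = b * n" using eq by auto
    have mx0: "m * x0 = m" using x0S inS by simp
    have "range (\<lambda>z. m * z) = range (\<lambda>z. (m * b) * z)"
    proof (intro equalityI subsetI)
      fix w assume "w \<in> range (\<lambda>z. m * z)"
      then obtain z where "w = m * z" by auto
      then have "w = (m * b) * (n * z)" using mx0 b by (metis mult.assoc)
      then show "w \<in> range (\<lambda>z. (m * b) * z)" by auto
    next
      fix w assume "w \<in> range (\<lambda>z. (m * b) * z)"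
      then obtain z where "w = m * b * z" by auto
      then have "w = m * (b * z)" by (simp add: mult.assoc)
      then show "w \<in> range (\<lambda>z. m * z)" by auto
    qed
    then have mb: "m = m * b" by (rule rt_range_eq[OF rt])
    have nS: "n \<in> S" using mb mx0 b by (metis inS mult.assoc)
    have "\<forall>s\<in>S. n * s = n" using x0Z a unfolding Z_def by (simp add: mult.assoc)
    with nS show "n \<in> Z" unfolding Z_def by blast
  qed
  then have "is_L_class Z" unfolding is_L_class_def by blast
  with EZ MI show ?thesis unfolding S_def by simp
qed

end
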